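(* Consider the following algorithm for $1\,||\,\sum w_jU_j$: let $d^{(1)}<\cdots<d^{(d_{\#})}$ be the distinct due dates and $J_i=\{j : d_j=d^{(i)}\}$; compute the solution vector $A_i$ of each $J_i$ (viewed as an instance on its own); set $A=A_1$; for $i=2,\ldots,d_{\#}$ set $A=A\oplus A_i$; return $\sum_j w_j - A[d_{\max}]$. This algorithm correctly returns the minimum total weight of tardy jobs.
   Context: In $1\,||\,\sum w_jU_j$ we are given $n$ jobs, job $j$ with processing time $p_j\in\mathbb{N}$, weight $w_j\in\mathbb{N}$, due date $d_j\in\mathbb{N}$; jobs are scheduled non-preemptively on one machine in some order, job $j$ is early if its completion time (sum of processing times of jobs up to and including $j$) is at most $d_j$ and tardy otherwise; the goal is the minimum total weight of tardy jobs. $d_{\max}=\max_j d_j$, $d_{\#}$ is the number of distinct due dates. A subset $S$ of jobs is called a set of early jobs if there is a schedule in which all jobs of $S$ are early. The solution vector of an instance $J$ (with maximum due date $D$) is the integer vector $(A[k])_{k=0}^{D}$ where $A[k]$ is the maximum total weight of a set of early jobs of $J$ with total processing time at most $k$. For integer vectors $A=(A[k])_{k=0}^m$, $B=(B[\ell])_{\ell=0}^{n'}$ with $m\le n'$, the $(\max,+)$-convolution $A\oplus B$ is the vector $(C[\ell])_{\ell=0}^{n'}$ with $C[\ell]=\max_{0\le k\le \ell}(A[k]+B[\ell-k])$ (terms with $k>m$ omitted). *)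

theory Defs
  imports Main
begin

definition completion :: "(nat \<Rightarrow> nat) \<Rightarrow> nat list \<Rightarrow> nat \<Rightarrow> nat" where
  "completion p \<sigma> i = sum_list (map p (take (Suc i) \<sigma>))"

definition is_schedule :: "nat set \<Rightarrow> nat list \<Rightarrow> bool" where
  "is_schedule J \<sigma> \<longleftrightarrow> distinct \<sigma> \<and> set \<sigma> = J"

definition tardy_weight :: "(nat \<Rightarrow> nat) \<Rightarrow> (nat \<Rightarrow> nat) \<Rightarrow> (nat \<Rightarrow> nat) \<Rightarrow> nat list \<Rightarrow> nat" where
  "tardy_weight p w d \<sigma> =
     (\<Sum>i<length \<sigma>. if completion p \<sigma> i > d (\<sigma> ! i) then w (\<sigma> ! i) else 0)"

definition opt_tardy :: "nat \<Rightarrow> (nat \<Rightarrow> nat) \<Rightarrow> (nat \<Rightarrow> nat) \<Rightarrow> (nat \<Rightarrow> nat) \<Rightarrow> nat" where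
  "opt_tardy n p w d = Min {tardy_weight p w d \<sigma> | \<sigma>. is_schedule {..<n} \<sigma>}"

definition early_set :: "(nat \<Rightarrow> nat) \<Rightarrow> (nat \<Rightarrow> nat) \<Rightarrow> nat set \<Rightarrow> nat set \<Rightarrow> bool" where
  "early_set p d J S \<longleftrightarrow> S \<subseteq> J \<and>
     (\<exists>\<sigma>. is_schedule J \<sigma> \<and> (\<forall>i<length \<sigma>. \<sigma> ! i \<in> S \<longrightarrow> completion p \<sigma> i \<le> d (\<sigma> ! i)))"

definition sol_vec :: "(nat \<Rightarrow> nat) \<Rightarrow> (nat \<Rightarrow> nat) \<Rightarrow> (nat \<Rightarrow> nat) \<Rightarrow> nat set \<Rightarrow> int list" where
  "sol_vec p w d J =
     map (\<lambda>k. Max {int (sum w S) | S. early_set p d J S \<and> sum p S \<le> k}) [0..<Suc (Max (d ` J))]"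

(* (max,+)-convolution of A = (A[k])_{k=0..m} and B = (B[l])_{l=0..n'}, m <= n';
   result has length n'+1, terms with k > m omitted *)
definition maxplus_conv :: "int list \<Rightarrow> int list \<Rightarrow> int list" where
  "maxplus_conv A B =
     map (\<lambda>l. Max {A ! k + B ! (l - k) | k. k \<le> l \<and> k < length A}) [0..<length B]"

definition distinct_due_dates :: "nat \<Rightarrow> (nat \<Rightarrow> nat) \<Rightarrow> nat list" where
  "distinct_due_dates n d = sorted_list_of_set (d ` {..<n})"

definition due_class :: "nat \<Rightarrow> (nat \<Rightarrow> nat) \<Rightarrow> nat \<Rightarrow> nat set" where
  "due_class n d dd = {j. j < n \<and> d j = dd}"

definition algorithm :: "nat \<Rightarrow> (nat \<Rightarrow> nat) \<Rightarrow> (nat \<Rightarrow> nat) \<Rightarrow> (nat \<Rightarrow> nat) \<Rightarrow> int" where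
  "algorithm n p w d =
     (let vecs = map (\<lambda>dd. sol_vec p w d (due_class n d dd)) (distinct_due_dates n d);
          A = foldl maxplus_conv (hd vecs) (tl vecs);
          dmax = Max (d ` {..<n})
      in int (\<Sum>j<n. w j) - A ! dmax)"

end

theory Submission
  imports Defs
begin


definition feas :: "(nat\<Rightarrow>nat) \<Rightarrow> (nat\<Rightarrow>nat) \<Rightarrow> nat set \<Rightarrow> bool" where
  "feas p d S \<longleftrightarrow> (\<forall>t. sum p {x\<in>S. d x \<le> t} \<le> t)"

definition best :: "(nat\<Rightarrow>nat) \<Rightarrow> (nat\<Rightarrow>nat) \<Rightarrow> (nat\<Rightarrow>nat) \<Rightarrow> nat set \<Rightarrow> nat \<Rightarrow> int" where
  "best p w d J k = Max {int (sum w S) | S. S \<subseteq> J \<and> feas p d S \<and> sum p S \<le> k}"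

lemma feas_empty: "feas p d {}" by (simp add: feas_def)

lemma feas_subset: "feas p d S \<Longrightarrow> T \<subseteq> S \<Longrightarrow> finite S \<Longrightarrow> feas p d T"
  unfolding feas_def
proof safe
  fix t assume "\<forall>t. sum p {x \<in> S. d x \<le> t} \<le> t" "T \<subseteq> S" "finite S"
  then have "sum p {x \<in> T. d x \<le> t} \<le> sum p {x \<in> S. d x \<le> t}"
    by (intro sum_mono2) auto
  then show "sum p {x \<in> T. d x \<le> t} \<le> t" using \<open>\<forall>t. _\<close> by (meson order_trans)
qed

lemma feas_sum_le: "feas p d S \<Longrightarrow> \<forall>x\<in>S. d x \<le> a \<Longrightarrow> sum p S \<le> a"
proof -
  assume "feas p d S" "\<forall>x\<in>S. d x \<le> a"
  then have "{x\<in>S. d x \<le> a} = S" by auto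
  then show ?thesis using \<open>feas p d S\<close> unfolding feas_def by metis
qed

lemma feas_combine:
  assumes "finite S1" "finite S2" "feas p d S1" "\<forall>x\<in>S1. d x < c" "\<forall>x\<in>S2. d x = c"
    "sum p (S1 \<union> S2) \<le> c"
  shows "feas p d (S1 \<union> S2)"
  unfolding feas_def
proof
  fix t
  show "sum p {x \<in> S1 \<union> S2. d x \<le> t} \<le> t"
  proof (cases "c \<le> t")
    case True
    have "sum p {x \<in> S1 \<union> S2. d x \<le> t} \<le> sum p (S1 \<union> S2)"
      using assms by (intro sum_mono2) auto
    then show ?thesis using True assms(6) by linarith
  next
    case False
    then have "{x \<in> S1 \<union> S2. d x \<le> t} = {x \<in> S1. d x \<le> t}" using assms(5) by auto
    then show ?thesis using assms(3) unfolding feas_def by simp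
  qed
qed

lemma best_set_finite: "finite J \<Longrightarrow> finite {int (sum w S) | S. S \<subseteq> J \<and> feas p d S \<and> sum p S \<le> k}"
proof -
  assume "finite J"
  have "{int (sum w S) | S. S \<subseteq> J \<and> feas p d S \<and> sum p S \<le> k} \<subseteq> (\<lambda>S. int (sum w S)) ` Pow J"
    by auto
  then show ?thesis using \<open>finite J\<close> by (meson finite_Pow_iff finite_imageI finite_subset)
qed

lemma best_set_ne: "{int (sum w S) | S. S \<subseteq> J \<and> feas p d S \<and> sum p S \<le> k} \<noteq> {}"
  using feas_empty by fastforce

lemma best_ge: "finite J \<Longrightarrow> S \<subseteq> J \<Longrightarrow> feas p d S \<Longrightarrow> sum p S \<le> k \<Longrightarrow> int (sum w S) \<le> best p w d J k"
  unfolding best_def by (rule Max_ge[OF best_set_finite]) auto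

lemma best_obtain:
  assumes "finite J"
  obtains S where "S \<subseteq> J" "feas p d S" "sum p S \<le> k" "best p w d J k = int (sum w S)"
proof -
  have "best p w d J k \<in> {int (sum w S) | S. S \<subseteq> J \<and> feas p d S \<and> sum p S \<le> k}"
    unfolding best_def by (rule Max_in[OF best_set_finite[OF assms] best_set_ne])
  then show ?thesis using that by blast
qed

lemma edd:
  assumes "finite J"
  shows "early_set p d J S \<longleftrightarrow> S \<subseteq> J \<and> feas p d S"
proof
  assume "early_set p d J S"
  then obtain \<sigma> where SJ: "S \<subseteq> J" and sch: "distinct \<sigma>" "set \<sigma> = J"
    and early: "\<forall>i<length \<sigma>. \<sigma> ! i \<in> S \<longrightarrow> completion p \<sigma> i \<le> d (\<sigma> ! i)"
    unfolding early_set_def is_schedule_def by blast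
  have "feas p d S" unfolding feas_def
  proof
    fix t
    define X where "X = {x\<in>S. d x \<le> t}"
    show "sum p {x\<in>S. d x \<le> t} \<le> t"
    proof (cases "X = {}")
      case True then have "sum p X = 0" by simp
      then show ?thesis by (simp add: X_def)
    next
      case False
      define I where "I = {i. i < length \<sigma> \<and> \<sigma> ! i \<in> X}"
      have finI: "finite I" unfolding I_def by simp
      have "I \<noteq> {}"
      proof -
        obtain x where "x \<in> X" using False by blast
        then have "x \<in> set \<sigma>" using SJ sch X_def by auto
        then obtain i where "i < length \<sigma>" "\<sigma> ! i = x" by (auto simp: in_set_conv_nth)
        then show ?thesis using \<open>x \<in> X\<close> I_def by blast
      qed
      define m where "m = Max I"
      have mI: "m \<in> I" using finI \<open>I \<noteq> {}\<close> m_def by simp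
      have sub: "X \<subseteq> set (take (Suc m) \<sigma>)"
      proof
        fix x assume "x \<in> X"
        then have "x \<in> set \<sigma>" using SJ sch X_def by auto
        then obtain i where i: "i < length \<sigma>" "\<sigma> ! i = x" by (auto simp: in_set_conv_nth)
        then have "i \<in> I" using \<open>x \<in> X\<close> I_def by blast
        then have "i \<le> m" using finI m_def by simp
        then have "take (Suc m) \<sigma> ! i = x" "i < length (take (Suc m) \<sigma>)" using i by auto
        then show "x \<in> set (take (Suc m) \<sigma>)" by (metis nth_mem)
      qed
      have "sum p X \<le> sum p (set (take (Suc m) \<sigma>))" using sub by (intro sum_mono2) auto
      also have "\<dots> = completion p \<sigma> m"
        unfolding completion_def using sch by (simp add: sum_list_distinct_conv_sum_set)
      also have "\<dots> \<le> d (\<sigma> ! m)" using early mI I_def X_def by auto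
      also have "\<dots> \<le> t" using mI I_def X_def by auto
      finally show ?thesis by (simp add: X_def)
    qed
  qed
  then show "S \<subseteq> J \<and> feas p d S" using SJ by blast
next
  assume a: "S \<subseteq> J \<and> feas p d S"
  then have finS: "finite S" using assms finite_subset by blast
  define \<tau> where "\<tau> = sort_key d (sorted_list_of_set S)"
  define \<rho> where "\<rho> = sorted_list_of_set (J - S)"
  define \<sigma> where "\<sigma> = \<tau> @ \<rho>"
  have st: "set \<tau> = S" "distinct \<tau>" unfolding \<tau>_def using finS by auto
  have sr: "set \<rho> = J - S" "distinct \<rho>" unfolding \<rho>_def using assms by auto
  have sch: "is_schedule J \<sigma>" unfolding is_schedule_def \<sigma>_def using st sr a by auto
  have srt: "sorted (map d \<tau>)" unfolding \<tau>_def by simp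
  have "\<forall>i<length \<sigma>. \<sigma> ! i \<in> S \<longrightarrow> completion p \<sigma> i \<le> d (\<sigma> ! i)"
  proof safe
    fix i assume i: "i < length \<sigma>" "\<sigma> ! i \<in> S"
    have il: "i < length \<tau>"
    proof (rule ccontr)
      assume "\<not> i < length \<tau>"
      then have "\<sigma> ! i = \<rho> ! (i - length \<tau>)" "i - length \<tau> < length \<rho>"
        using i unfolding \<sigma>_def by (auto simp: nth_append)
      then have "\<sigma> ! i \<in> J - S" using sr by (metis nth_mem)
      then show False using i by blast
    qed
    then have si: "\<sigma> ! i = \<tau> ! i" unfolding \<sigma>_def by (simp add: nth_append)
    have tk: "take (Suc i) \<sigma> = take (Suc i) \<tau>" unfolding \<sigma>_def using il by simp
    have sub: "set (take (Suc i) \<tau>) \<subseteq> {x\<in>S. d x \<le> d (\<tau> ! i)}"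
    proof
      fix x assume "x \<in> set (take (Suc i) \<tau>)"
      then obtain j where j: "j < length (take (Suc i) \<tau>)" "take (Suc i) \<tau> ! j = x"
        by (auto simp: in_set_conv_nth)
      then have "j \<le> i" "x = \<tau> ! j" using il by auto
      then have "d x \<le> d (\<tau> ! i)" using sorted_nth_mono[OF srt, of j i] il by simp
      moreover have "x \<in> S" using \<open>x = \<tau> ! j\<close> j il st by auto
      ultimately show "x \<in> {x\<in>S. d x \<le> d (\<tau> ! i)}" by simp
    qed
    have "completion p \<sigma> i = sum p (set (take (Suc i) \<tau>))"
      unfolding completion_def tk using st by (simp add: sum_list_distinct_conv_sum_set)
    also have "\<dots> \<le> sum p {x\<in>S. d x \<le> d (\<tau> ! i)}" using sub finS by (intro sum_mono2) auto
    also have "\<dots> \<le> d (\<tau> ! i)" using a unfolding feas_def by blast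
    finally show "completion p \<sigma> i \<le> d (\<sigma> ! i)" using si by simp
  qed
  then show "early_set p d J S" unfolding early_set_def using a sch by blast
qed


lemma conv_step:
  assumes fU: "finite U" and fC: "finite C" and dU: "\<forall>x\<in>U. d x \<le> a" and ac: "a < c"
    and dC: "\<forall>x\<in>C. d x = c" and lc: "l \<le> c"
  shows "Max {best p w d U k + best p w d C (l-k) | k. k \<le> l \<and> k < Suc a} = best p w d (U \<union> C) l"
proof (rule antisym)
  let ?L = "{best p w d U k + best p w d C (l-k) | k. k \<le> l \<and> k < Suc a}"
  have finL: "finite ?L" by simp
  have neL: "?L \<noteq> {}" by auto
  show "Max ?L \<le> best p w d (U \<union> C) l"
  proof (rule Max.boundedI[OF finL neL])
    fix y assume "y \<in> ?L"
    then obtain k where k: "k \<le> l" "y = best p w d U k + best p w d C (l-k)" by blast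
    obtain S1 where S1: "S1 \<subseteq> U" "feas p d S1" "sum p S1 \<le> k" "best p w d U k = int (sum w S1)"
      using best_obtain[OF fU] by metis
    obtain S2 where S2: "S2 \<subseteq> C" "sum p S2 \<le> l - k" "best p w d C (l-k) = int (sum w S2)"
      using best_obtain[OF fC] by metis
    have f1: "finite S1" "finite S2" using S1 S2 fU fC finite_subset by auto
    have dis: "S1 \<inter> S2 = {}" using S1 S2 dU dC ac by fastforce
    have sp: "sum p (S1 \<union> S2) = sum p S1 + sum p S2" using sum.union_disjoint[OF f1 dis] by simp
    have sw: "sum w (S1 \<union> S2) = sum w S1 + sum w S2" using sum.union_disjoint[OF f1 dis] by simp
    have spl: "sum p (S1 \<union> S2) \<le> l" using sp S1 S2 k by linarith
    have "feas p d (S1 \<union> S2)"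
      by (rule feas_combine[OF f1 S1(2), where c=c]) (use S1 S2 dU dC ac spl lc in force)+
    then have "int (sum w (S1 \<union> S2)) \<le> best p w d (U \<union> C) l"
      using S1 S2 spl by (intro best_ge) (use fU fC in auto)
    then show "y \<le> best p w d (U \<union> C) l" using k S1 S2 sw by simp
  qed
next
  let ?L = "{best p w d U k + best p w d C (l-k) | k. k \<le> l \<and> k < Suc a}"
  have finL: "finite ?L" by simp
  obtain S where S: "S \<subseteq> U \<union> C" "feas p d S" "sum p S \<le> l" "best p w d (U \<union> C) l = int (sum w S)"
    using best_obtain[of "U \<union> C"] fU fC by (metis finite_UnI)
  define S1 where "S1 = S \<inter> U"
  define S2 where "S2 = S \<inter> C"
  have fS: "finite S" using S fU fC finite_subset by blast
  have f1: "finite S1" "finite S2" using fS S1_def S2_def by auto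
  have dis: "S1 \<inter> S2 = {}" using S1_def S2_def dU dC ac by fastforce
  have un: "S = S1 \<union> S2" using S S1_def S2_def by blast
  have sp: "sum p S = sum p S1 + sum p S2" using sum.union_disjoint[OF f1 dis] un by simp
  have sw: "sum w S = sum w S1 + sum w S2" using sum.union_disjoint[OF f1 dis] un by simp
  have fe1: "feas p d S1" using feas_subset[OF S(2) _ fS] S1_def by blast
  have fe2: "feas p d S2" using feas_subset[OF S(2) _ fS] S2_def by blast
  define k where "k = sum p S1"
  have ka: "k \<le> a" unfolding k_def using feas_sum_le[OF fe1] dU S1_def by blast
  have kl: "k \<le> l" using sp S(3) k_def by linarith
  have b1: "int (sum w S1) \<le> best p w d U k" using best_ge[OF fU _ fe1] S1_def k_def by blast
  have b2: "int (sum w S2) \<le> best p w d C (l-k)" using best_ge[OF fC _ fe2] S2_def sp S(3) k_def by auto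
  have "best p w d U k + best p w d C (l-k) \<in> ?L" using ka kl by auto
  then have "best p w d U k + best p w d C (l-k) \<le> Max ?L" using finL by (rule Max_ge[rotated])
  then show "best p w d (U \<union> C) l \<le> Max ?L" using S(4) sw b1 b2 by simp
qed

lemma sol_vec_class:
  assumes "dd \<in> d ` {..<n}"
  shows "sol_vec p w d (due_class n d dd) = map (best p w d (due_class n d dd)) [0..<Suc dd]"
proof -
  let ?C = "due_class n d dd"
  have fC: "finite ?C" unfolding due_class_def by simp
  have "d ` ?C = {dd}" using assms unfolding due_class_def by auto
  then have M: "Max (d ` ?C) = dd" by simp
  have "\<And>k. {int (sum w S) | S. early_set p d ?C S \<and> sum p S \<le> k}
     = {int (sum w S) | S. S \<subseteq> ?C \<and> feas p d S \<and> sum p S \<le> k}"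
    using edd[OF fC] by metis
  then show ?thesis unfolding sol_vec_def M best_def by simp
qed


lemma sched_split:
  assumes "is_schedule J \<sigma>"
  shows "tardy_weight p w d \<sigma> + sum w (nth \<sigma> ` {i. i < length \<sigma> \<and> completion p \<sigma> i \<le> d (\<sigma>!i)}) = sum w J"
proof -
  have dist: "distinct \<sigma>" and sJ: "set \<sigma> = J" using assms unfolding is_schedule_def by auto
  let ?E = "{i. i < length \<sigma> \<and> completion p \<sigma> i \<le> d (\<sigma>!i)}"
  have im: "nth \<sigma> ` {..<length \<sigma>} = J" using sJ by (auto simp: in_set_conv_nth)
  have "sum w J = (\<Sum>i<length \<sigma>. w (\<sigma>!i))"
    using sum.reindex[OF inj_on_nth[OF dist, of "{..<length \<sigma>}"], of w] im by simp
  also have "\<dots> = tardy_weight p w d \<sigma> + (\<Sum>i<length \<sigma>. if completion p \<sigma> i \<le> d (\<sigma>!i) then w (\<sigma>!i) else 0)"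
    unfolding tardy_weight_def sum.distrib[symmetric] by (intro sum.cong) auto
  also have "(\<Sum>i<length \<sigma>. if completion p \<sigma> i \<le> d (\<sigma>!i) then w (\<sigma>!i) else 0) = sum (\<lambda>i. w (\<sigma>!i)) ?E"
    using sum.inter_filter[of "{..<length \<sigma>}" "\<lambda>i. w (\<sigma>!i)" "\<lambda>i. completion p \<sigma> i \<le> d (\<sigma>!i)"]
    by (simp add: lessThan_def)
  also have "\<dots> = sum w (nth \<sigma> ` ?E)"
    using sum.reindex[OF inj_on_nth[OF dist, of ?E], of w] by simp
  finally show ?thesis by simp
qed

lemma conv_map:
  "maxplus_conv (map f [0..<Suc a]) (map g [0..<Suc c])
   = map (\<lambda>l. Max {f k + g (l-k) | k. k \<le> l \<and> k < Suc a}) [0..<Suc c]"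
proof -
  have eq: "{map f [0..<Suc a] ! k + map g [0..<Suc c] ! (l - k) |k. k \<le> l \<and> k < length (map f [0..<Suc a])}
     = {f k + g (l-k) | k. k \<le> l \<and> k < Suc a}" if l: "l < Suc c" for l
  proof (intro Collect_cong ex_cong1)
    fix x k
    show "(x = map f [0..<Suc a] ! k + map g [0..<Suc c] ! (l - k) \<and> k \<le> l \<and> k < length (map f [0..<Suc a])) =
          (x = f k + g (l - k) \<and> k \<le> l \<and> k < Suc a)"
      using l by (auto simp del: upt_Suc simp add: nth_map_upt)
  qed
  show ?thesis unfolding maxplus_conv_def
    by (rule map_cong) (use eq in \<open>simp_all del: upt_Suc\<close>)
qed




lemma opt_part:
  assumes "n > 0"
  shows "int (sum w {..<n}) - Max {int (sum w S) | S. early_set p d {..<n} S} = int (opt_tardy n p w d)"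
proof -
  let ?J = "{..<n::nat}"
  let ?TW = "{tardy_weight p w d \<sigma> | \<sigma>. is_schedule ?J \<sigma>}"
  let ?ES = "{int (sum w S) | S. early_set p d ?J S}"
  let ?Eo = "\<lambda>\<sigma>. nth \<sigma> ` {i. i < length \<sigma> \<and> completion p \<sigma> i \<le> d (\<sigma>!i)}"
  have twle: "tardy_weight p w d \<sigma> \<le> sum w ?J" if "is_schedule ?J \<sigma>" for \<sigma>
    using sched_split[OF that, of p w d] by linarith
  have finTW: "finite ?TW"
  proof (rule finite_subset[of _ "{..sum w ?J}"])
    show "?TW \<subseteq> {..sum w ?J}" using twle by blast
  qed simp
  have "is_schedule ?J [0..<n]" unfolding is_schedule_def by auto
  then have neTW: "?TW \<noteq> {}" by blast
  have earlyEo: "early_set p d ?J (?Eo \<sigma>)" if "is_schedule ?J \<sigma>" for \<sigma>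
  proof -
    have "?Eo \<sigma> \<subseteq> ?J"
    proof
      fix x assume "x \<in> ?Eo \<sigma>"
      then obtain i where "i < length \<sigma>" "x = \<sigma> ! i" by blast
      then have "x \<in> set \<sigma>" by simp
      then show "x \<in> ?J" using that unfolding is_schedule_def by simp
    qed
    moreover have "\<forall>i<length \<sigma>. \<sigma> ! i \<in> ?Eo \<sigma> \<longrightarrow> completion p \<sigma> i \<le> d (\<sigma> ! i)"
    proof (intro allI impI)
      fix i assume i: "i < length \<sigma>" "\<sigma> ! i \<in> ?Eo \<sigma>"
      then obtain j where j: "j < length \<sigma>" "\<sigma> ! i = \<sigma> ! j" "completion p \<sigma> j \<le> d (\<sigma> ! j)"
        by blast
      then have "i = j" using i that unfolding is_schedule_def by (simp add: nth_eq_iff_index_eq)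
      then show "completion p \<sigma> i \<le> d (\<sigma> ! i)" using j by simp
    qed
    ultimately show ?thesis unfolding early_set_def using that by blast
  qed
  have finES: "finite ?ES"
  proof (rule finite_subset[of _ "(\<lambda>S. int (sum w S)) ` Pow ?J"])
    show "?ES \<subseteq> (\<lambda>S. int (sum w S)) ` Pow ?J" unfolding early_set_def by blast
  qed simp
  obtain \<sigma>0 where s0: "is_schedule ?J \<sigma>0" "opt_tardy n p w d = tardy_weight p w d \<sigma>0"
  proof -
    have "opt_tardy n p w d \<in> ?TW" using Min_in[OF finTW neTW] unfolding opt_tardy_def .
    then show ?thesis using that by blast
  qed
  have inES: "int (sum w (?Eo \<sigma>0)) \<in> ?ES" using earlyEo[OF s0(1)] by blast
  have neES: "?ES \<noteq> {}" using inES by blast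
  have "int (sum w ?J) - int (opt_tardy n p w d) \<le> Max ?ES"
    using Max_ge[OF finES inES] sched_split[OF s0(1), of p w d] s0(2) by linarith
  moreover have "Max ?ES \<le> int (sum w ?J) - int (opt_tardy n p w d)"
  proof (rule Max.boundedI[OF finES neES])
    fix y assume "y \<in> ?ES"
    then obtain S where S: "y = int (sum w S)" "early_set p d ?J S" by blast
    then obtain \<sigma> where sg: "is_schedule ?J \<sigma>" "S \<subseteq> ?J"
      "\<forall>i<length \<sigma>. \<sigma> ! i \<in> S \<longrightarrow> completion p \<sigma> i \<le> d (\<sigma> ! i)"
      unfolding early_set_def by blast
    have "S \<subseteq> ?Eo \<sigma>"
    proof
      fix x assume "x \<in> S"
      then have "x \<in> set \<sigma>" using sg unfolding is_schedule_def by auto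
      then obtain i where "i < length \<sigma>" "\<sigma> ! i = x" by (auto simp: in_set_conv_nth)
      then show "x \<in> ?Eo \<sigma>" using sg(3) \<open>x \<in> S\<close> by blast
    qed
    then have "sum w S \<le> sum w (?Eo \<sigma>)" by (intro sum_mono2) auto
    moreover have "opt_tardy n p w d \<le> tardy_weight p w d \<sigma>"
      unfolding opt_tardy_def using finTW sg(1) by (intro Min_le) blast+
    ultimately show "y \<le> int (sum w ?J) - int (opt_tardy n p w d)"
      using sched_split[OF sg(1), of p w d] S(1) by linarith
  qed
  ultimately show ?thesis by linarith
qed



theorem lemma11:
  fixes n :: nat and p w d :: "nat \<Rightarrow> nat"
  assumes "n > 0"
  shows "algorithm n p w d = int (opt_tardy n p w d)"
proof -
  define T where "T = d ` {..<n}"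
  define ds where "ds = distinct_due_dates n d"
  define m where "m = length ds"
  define vecs where "vecs = map (\<lambda>dd. sol_vec p w d (due_class n d dd)) ds"
  define U where "U t = {j. j < n \<and> d j \<le> t}" for t
  have finT: "finite T" unfolding T_def by simp
  have neT: "T \<noteq> {}" unfolding T_def using assms by auto
  have setds: "set ds = T" unfolding ds_def distinct_due_dates_def T_def by simp
  have sds: "sorted_wrt (<) ds" unfolding ds_def distinct_due_dates_def by simp
  have sds': "sorted ds" unfolding ds_def distinct_due_dates_def by simp
  have m0: "m > 0" using setds neT m_def by (cases ds) auto
  have lv: "length vecs = m" unfolding vecs_def m_def by simp
  have dsT: "ds ! i \<in> T" if "i < m" for i using that setds m_def nth_mem by blast
  have vi: "vecs ! i = map (best p w d (due_class n d (ds!i))) [0..<Suc (ds!i)]" if "i < m" for i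
    using sol_vec_class[of "ds!i" d n p w] dsT[OF that] that unfolding vecs_def m_def T_def by simp
  have dex: "\<exists>k<m. d j = ds ! k" if "j < n" for j
  proof -
    have "d j \<in> set ds" using setds that T_def by auto
    then show ?thesis unfolding m_def by (metis in_set_conv_nth)
  qed
  have fU: "finite (U t)" for t unfolding U_def by simp
  have fC: "finite (due_class n d t)" for t unfolding due_class_def by simp
  have claim: "foldl maxplus_conv (hd vecs) (take i (tl vecs)) = map (best p w d (U (ds!i))) [0..<Suc(ds!i)]"
    if "i < m" for i
    using that
  proof (induction i)
    case 0
    have "U (ds!0) = due_class n d (ds!0)"
    proof -
      have "d j = ds ! 0" if "j < n" "d j \<le> ds ! 0" for j
      proof -
        obtain k where "k < m" "d j = ds ! k" using dex \<open>j < n\<close> by blast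
        then have "ds ! 0 \<le> ds ! k" using sorted_nth_mono[OF sds', of 0 k] m_def by simp
        then show ?thesis using that \<open>d j = ds ! k\<close> by simp
      qed
      then show ?thesis unfolding U_def due_class_def by auto
    qed
    moreover have "hd vecs = vecs ! 0" using lv m0 by (cases vecs) auto
    ultimately show ?case using vi[OF m0] by simp
  next
    case (Suc i)
    let ?a = "ds ! i" and ?c = "ds ! Suc i"
    have im: "i < m" using Suc by simp
    have ac: "?a < ?c" using sorted_wrt_nth_less[OF sds, of i "Suc i"] Suc m_def by simp
    have tk: "take (Suc i) (tl vecs) = take i (tl vecs) @ [vecs ! Suc i]"
      using Suc lv by (simp add: take_Suc_conv_app_nth nth_tl)
    have Ueq: "U ?c = U ?a \<union> due_class n d ?c"
    proof -
      have "d j \<le> ?a \<or> d j = ?c" if "j < n" "d j \<le> ?c" for j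
      proof -
        obtain k where k: "k < m" "d j = ds ! k" using dex \<open>j < n\<close> by blast
        consider "k \<le> i" | "k = Suc i" | "k > Suc i" by linarith
        then show ?thesis
        proof cases
          case 1 then show ?thesis using sorted_nth_mono[OF sds', of k i] k im m_def by simp
        next
          case 2 then show ?thesis using k by simp
        next
          case 3 then have "?c < ds ! k" using sorted_wrt_nth_less[OF sds, of "Suc i" k] k m_def by simp
          then show ?thesis using that k by simp
        qed
      qed
      then show ?thesis unfolding U_def due_class_def using ac by fastforce
    qed
    have "foldl maxplus_conv (hd vecs) (take (Suc i) (tl vecs))
        = maxplus_conv (map (best p w d (U ?a)) [0..<Suc ?a]) (map (best p w d (due_class n d ?c)) [0..<Suc ?c])"
      unfolding tk using Suc.IH[OF im] vi[OF Suc.prems] by simp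
    also have "\<dots> = map (\<lambda>l. Max {best p w d (U ?a) k + best p w d (due_class n d ?c) (l-k) | k. k \<le> l \<and> k < Suc ?a}) [0..<Suc ?c]"
      by (rule conv_map)
    also have "\<dots> = map (best p w d (U ?c)) [0..<Suc ?c]"
    proof (rule map_cong[OF refl])
      fix l assume "l \<in> set [0..<Suc ?c]"
      then have l: "l \<le> ?c" by (simp del: upt_Suc)
      show "Max {best p w d (U ?a) k + best p w d (due_class n d ?c) (l-k) | k. k \<le> l \<and> k < Suc ?a} = best p w d (U ?c) l"
        unfolding Ueq
        by (rule conv_step[OF fU fC _ ac _ l]) (auto simp: U_def due_class_def)
    qed
    finally show ?case .
  qed
  define dmax where "dmax = Max T"
  have last: "ds ! (m - 1) = dmax"
  proof (rule antisym)
    show "ds ! (m-1) \<le> dmax" using dsT[of "m-1"] m0 finT dmax_def by simp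
    have "dmax \<in> set ds" using Max_in[OF finT neT] setds dmax_def by simp
    then obtain k where "k < m" "dmax = ds ! k" unfolding m_def by (metis in_set_conv_nth)
    then show "dmax \<le> ds ! (m-1)" using sorted_nth_mono[OF sds', of k "m-1"] m_def by simp
  qed
  have tkall: "take (m-1) (tl vecs) = tl vecs" using lv by simp
  have Ufull: "U dmax = {..<n}" unfolding U_def dmax_def T_def using finT T_def by auto
  have A: "foldl maxplus_conv (hd vecs) (tl vecs) ! dmax = best p w d {..<n} dmax"
    using claim[of "m-1"] m0 unfolding tkall last Ufull by (simp del: upt_Suc add: nth_map_upt)
  have B: "best p w d {..<n} dmax = Max {int (sum w S) | S. early_set p d {..<n} S}"
  proof -
    have "S \<subseteq> {..<n} \<and> feas p d S \<and> sum p S \<le> dmax \<longleftrightarrow> early_set p d {..<n} S" for S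
    proof -
      have "S \<subseteq> {..<n} \<Longrightarrow> feas p d S \<Longrightarrow> sum p S \<le> dmax"
        by (rule feas_sum_le) (use finT dmax_def T_def in auto)
      then show ?thesis using edd[of "{..<n}" p d S] by auto
    qed
    then show ?thesis unfolding best_def by presburger
  qed
  have "algorithm n p w d = int (\<Sum>j<n. w j) - foldl maxplus_conv (hd vecs) (tl vecs) ! dmax"
    unfolding algorithm_def Let_def vecs_def ds_def dmax_def T_def by simp
  also have "\<dots> = int (opt_tardy n p w d)" using A B opt_part[OF assms] by simp
  finally show ?thesis .
qed

end
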